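(* Let $G_1$ and $G_2$ be two vertex-disjoint simple connected graphs with $|V(G_1)|=n_1$, $|V(G_2)|=n_2$, $|E(G_1)|=m_1$, $|E(G_2)|=m_2$. Then the edge T-join $G_1\underline{\vee}_T G_2$ satisfies \[ F(G_1\underline{\vee}_T G_2)=8F(G_1)+F(G_2)+3n_2^{2}M_1(G_1)+3m_1M_1(G_2)+M_4(G_1)+3n_2\,HM(G_1)+3\,ReZM(G_1)+m_1^{2}(6m_2+m_1n_2)+m_1n_2^{3}. \]
   Context: For a simple graph $G$ and $v\in V(G)$, $d_G(v)$ is the degree of $v$. Define $M_1(G)=\sum_{v\in V(G)}d_G(v)^2$, $F(G)=\sum_{v\in V(G)}d_G(v)^3$, $M_4(G)=\sum_{v\in V(G)}d_G(v)^4$, $HM(G)=\sum_{uv\in E(G)}[d_G(u)+d_G(v)]^2$, and $ReZM(G)=\sum_{uv\in E(G)}d_G(u)d_G(v)\,[d_G(u)+d_G(v)]$. The total graph $T(G)$ is obtained from $G$ (keeping all edges of $G$) by inserting a new vertex for each edge of $G$, joining each new vertex to the two end vertices of its edge, and joining by an edge each pair of new vertices corresponding to adjacent edges of $G$ (edges sharing an end vertex); let $I(G)$ denote the set of these new vertices, so $V(T(G))=V(G)\cup I(G)$. The edge T-join $G_1\underline{\vee}_T G_2$ is the graph obtained from $T(G_1)$ and $G_2$ (taken vertex-disjoint) by joining each vertex of $I(G_1)$ to every vertex of $G_2$ by an edge. *)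

theory Defs
  imports Main
begin

type_synonym 'a graph = "'a set \<times> 'a set set"

definition verts :: "'a graph \<Rightarrow> 'a set" where "verts G = fst G"
definition edges :: "'a graph \<Rightarrow> 'a set set" where "edges G = snd G"

definition simple_graph :: "'a graph \<Rightarrow> bool" where
  "simple_graph G \<longleftrightarrow> finite (verts G) \<and>
     (\<forall>e\<in>edges G. \<exists>u v. u \<in> verts G \<and> v \<in> verts G \<and> u \<noteq> v \<and> e = {u, v})"

definition connected_graph :: "'a graph \<Rightarrow> bool" where
  "connected_graph G \<longleftrightarrow> verts G \<noteq> {} \<and>
     (\<forall>u\<in>verts G. \<forall>v\<in>verts G. (u, v) \<in> {(x, y). {x, y} \<in> edges G}\<^sup>*)"

definition degree :: "'a graph \<Rightarrow> 'a \<Rightarrow> nat" where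
  "degree G v = card {e \<in> edges G. v \<in> e}"

definition M1 :: "'a graph \<Rightarrow> nat" where
  "M1 G = (\<Sum>v\<in>verts G. degree G v ^ 2)"

definition Fidx :: "'a graph \<Rightarrow> nat" where
  "Fidx G = (\<Sum>v\<in>verts G. degree G v ^ 3)"

definition M4 :: "'a graph \<Rightarrow> nat" where
  "M4 G = (\<Sum>v\<in>verts G. degree G v ^ 4)"

definition HM :: "'a graph \<Rightarrow> nat" where
  "HM G = (\<Sum>e\<in>edges G. (\<Sum>v\<in>e. degree G v) ^ 2)"

definition ReZM :: "'a graph \<Rightarrow> nat" where
  "ReZM G = (\<Sum>e\<in>edges G. (\<Prod>v\<in>e. degree G v) * (\<Sum>v\<in>e. degree G v))"

text \<open>Total graph: original vertices are tagged Inl, edge-vertices (the set I(G)) are tagged Inr.\<close>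

definition total_graph :: "'a graph \<Rightarrow> ('a + 'a set) graph" where
  "total_graph G =
    (Inl ` verts G \<union> Inr ` edges G,
     (\<lambda>e. Inl ` e) ` edges G
     \<union> {{Inl v, Inr e} | v e. e \<in> edges G \<and> v \<in> e}
     \<union> {{Inr e, Inr f} | e f. e \<in> edges G \<and> f \<in> edges G \<and> e \<noteq> f \<and> e \<inter> f \<noteq> {}})"

definition edge_T_join :: "'a graph \<Rightarrow> 'b graph \<Rightarrow> (('a + 'a set) + 'b) graph" where
  "edge_T_join G1 G2 =
    (Inl ` verts (total_graph G1) \<union> Inr ` verts G2,
     (\<lambda>e. Inl ` e) ` edges (total_graph G1)
     \<union> (\<lambda>e. Inr ` e) ` edges G2
     \<union> {{Inl (Inr e), Inr w} | e w. e \<in> edges G1 \<and> w \<in> verts G2})"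

end

theory Submission
  imports Defs
begin

lemma sg_fin:
  assumes "simple_graph G"
  shows "finite (verts G)" "finite (edges G)"
proof -
  show fv: "finite (verts G)" using assms by (simp add: simple_graph_def)
  have "edges G \<subseteq> Pow (verts G)" using assms unfolding simple_graph_def by fastforce
  then show "finite (edges G)" using fv by (meson finite_Pow_iff finite_subset)
qed

lemma sg_edge:
  assumes "simple_graph G" "e \<in> edges G"
  obtains u v where "u \<in> verts G" "v \<in> verts G" "u \<noteq> v" "e = {u, v}"
  using assms unfolding simple_graph_def by blast

lemma handshake:
  assumes "simple_graph G"
  shows "(\<Sum>e\<in>edges G. \<Sum>v\<in>e. f v) = (\<Sum>v\<in>verts G. degree G v * f v)"
proof -
  have fv: "finite (verts G)" and fe: "finite (edges G)" using sg_fin[OF assms] by auto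
  have sub: "\<And>e. e \<in> edges G \<Longrightarrow> e \<subseteq> verts G"
    using assms by (metis sg_edge empty_subsetI insert_subset)
  have "(\<Sum>e\<in>edges G. \<Sum>v\<in>e. f v) = (\<Sum>e\<in>edges G. \<Sum>v\<in>verts G. if v \<in> e then f v else 0)"
  proof (rule sum.cong[OF refl])
    fix e assume "e \<in> edges G"
    then have "verts G \<inter> e = e" using sub by blast
    then show "(\<Sum>v\<in>e. f v) = (\<Sum>v\<in>verts G. if v \<in> e then f v else 0)"
      using sum.inter_restrict[OF fv, of f e] by simp
  qed
  also have "\<dots> = (\<Sum>v\<in>verts G. \<Sum>e\<in>edges G. if v \<in> e then f v else 0)"
    by (rule sum.swap)
  also have "\<dots> = (\<Sum>v\<in>verts G. degree G v * f v)"
  proof (rule sum.cong[OF refl])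
    fix v
    show "(\<Sum>e\<in>edges G. if v \<in> e then f v else 0) = degree G v * f v"
      using sum.inter_filter[OF fe, of "\<lambda>_. f v" "\<lambda>e. v \<in> e"]
      by (simp add: degree_def)
  qed
  finally show ?thesis .
qed

lemma inj_img: "inj f \<Longrightarrow> inj_on ((`) f) A"
  by (simp add: inj_on_def inj_image_eq_iff)

lemma edges_T: "edges (total_graph G) =
     (\<lambda>e. Inl ` e) ` edges G
     \<union> {{Inl v, Inr e} | v e. e \<in> edges G \<and> v \<in> e}
     \<union> {{Inr e, Inr f} | e f. e \<in> edges G \<and> f \<in> edges G \<and> e \<noteq> f \<and> e \<inter> f \<noteq> {}}"
  by (simp add: edges_def total_graph_def)

lemma verts_T: "verts (total_graph G) = Inl ` verts G \<union> Inr ` edges G"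
  by (simp add: verts_def total_graph_def)

lemma edges_J: "edges (edge_T_join G1 G2) =
     (\<lambda>e. Inl ` e) ` edges (total_graph G1)
     \<union> (\<lambda>e. Inr ` e) ` edges G2
     \<union> {{Inl (Inr e), Inr w} | e w. e \<in> edges G1 \<and> w \<in> verts G2}"
  by (simp add: edges_def edge_T_join_def)

lemma verts_J: "verts (edge_T_join G1 G2) = Inl ` verts (total_graph G1) \<union> Inr ` verts G2"
  by (simp add: verts_def edge_T_join_def)

lemma finite_T: assumes "simple_graph G" shows "finite (edges (total_graph G))"
proof -
  have fe: "finite (edges G)" using sg_fin[OF assms] by auto
  have "{{Inl v, Inr e} | v e. e \<in> edges G \<and> v \<in> e} \<subseteq> (\<lambda>(v,e). {Inl v, Inr e}) ` (\<Union>(edges G) \<times> edges G)"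
    by auto
  moreover have "finite (\<Union>(edges G))" using fe assms
    by (metis finite_Union sg_edge finite.emptyI finite_insert)
  ultimately have f2: "finite {{Inl v, Inr e} | v e. e \<in> edges G \<and> v \<in> e}"
    using fe by (meson finite_SigmaI finite_imageI finite_subset)
  have "{{Inr e, Inr f} | e f. e \<in> edges G \<and> f \<in> edges G \<and> e \<noteq> f \<and> e \<inter> f \<noteq> {}}
     \<subseteq> (\<lambda>(e,f). {Inr e, Inr f :: 'a + 'a set}) ` (edges G \<times> edges G)" by auto
  then have f3: "finite {{Inr e, Inr f :: 'a + 'a set} | e f. e \<in> edges G \<and> f \<in> edges G \<and> e \<noteq> f \<and> e \<inter> f \<noteq> {}}"
    by (rule finite_subset[OF _ finite_imageI[OF finite_cartesian_product[OF fe fe]]])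
  show ?thesis unfolding edges_T using fe f2 f3 by simp
qed

lemma deg_T_Inl:
  assumes "simple_graph G" "v \<in> verts G"
  shows "degree (total_graph G) (Inl v) = 2 * degree G v"
proof -
  have fe: "finite (edges G)" using sg_fin[OF assms(1)] by auto
  let ?A = "{e \<in> edges G. v \<in> e}"
  have eq: "{x \<in> edges (total_graph G). Inl v \<in> x} = (\<lambda>e. Inl ` e) ` ?A \<union> (\<lambda>e. {Inl v, Inr e}) ` ?A"
    unfolding edges_T by auto
  have "card ((\<lambda>e. (Inl :: 'a \<Rightarrow> 'a + 'a set) ` e) ` ?A) = card ?A"
    by (rule card_image) (simp add: inj_img)
  moreover have "card ((\<lambda>e. {Inl v, Inr e}) ` ?A) = card ?A"
    by (rule card_image) (auto simp: inj_on_def doubleton_eq_iff)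
  moreover have "(\<lambda>e. Inl ` e) ` ?A \<inter> (\<lambda>e. {Inl v, Inr e}) ` ?A = {}" by auto
  ultimately show ?thesis unfolding degree_def eq using fe
    by (subst card_Un_disjoint) auto
qed

lemma deg_T_Inr:
  assumes "simple_graph G" "e \<in> edges G" "u \<noteq> v" "e = {u, v}"
  shows "degree (total_graph G) (Inr e) = degree G u + degree G v"
proof -
  have fe: "finite (edges G)" using sg_fin[OF assms(1)] by auto
  let ?U = "{f \<in> edges G. u \<in> f}" and ?V = "{f \<in> edges G. v \<in> f}"
  let ?B = "?U \<union> ?V - {e}"
  have eq: "{x \<in> edges (total_graph G). Inr e \<in> x} = {{Inl u, Inr e}, {Inl v, Inr e}} \<union> (\<lambda>f. {Inr e, Inr f :: 'a + 'a set}) ` ?B"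
  proof (rule set_eqI, rule iffI)
    fix x assume "x \<in> {x \<in> edges (total_graph G). Inr e \<in> x}"
    then have x: "x \<in> edges (total_graph G)" "Inr e \<in> x" by auto
    show "x \<in> {{Inl u, Inr e}, {Inl v, Inr e}} \<union> (\<lambda>f. {Inr e, Inr f :: 'a + 'a set}) ` ?B"
    proof -
      consider (a) f where "f \<in> edges G" "x = Inl ` f"
        | (b) w e' where "e' \<in> edges G" "w \<in> e'" "x = {Inl w, Inr e'}"
        | (c) e1 f1 where "e1 \<in> edges G" "f1 \<in> edges G" "e1 \<noteq> f1" "e1 \<inter> f1 \<noteq> {}" "x = {Inr e1, Inr f1}"
        using x(1) unfolding edges_T by blast
      then show ?thesis
      proof cases
        case a then show ?thesis using x(2) by auto
      next
        case b then have "e' = e" using x(2) by auto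
        with b assms(4) show ?thesis by auto
      next
        case c
        then have "e1 = e \<or> f1 = e" using x(2) by auto
        then show ?thesis
        proof
          assume h: "e1 = e"
          then have "f1 \<in> ?B" using c assms(4) by auto
          then show ?thesis using c h by auto
        next
          assume h: "f1 = e"
          then have "e1 \<in> ?B" using c assms(4) by auto
          moreover have "x = {Inr e, Inr e1}" using c h by auto
          ultimately show ?thesis by auto
        qed
      qed
    qed
  next
    fix x assume x: "x \<in> {{Inl u, Inr e}, {Inl v, Inr e}} \<union> (\<lambda>f. {Inr e, Inr f :: 'a + 'a set}) ` ?B"
    show "x \<in> {x \<in> edges (total_graph G). Inr e \<in> x}"
    proof (cases "x \<in> {{Inl u, Inr e}, {Inl v, Inr e}}")
      case True then show ?thesis unfolding edges_T using assms(2,4) by auto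
    next
      case False
      then obtain f where f: "f \<in> ?B" "x = {Inr e, Inr f}" using x by auto
      then have "e \<inter> f \<noteq> {}" using assms(4) by auto
      then show ?thesis unfolding edges_T using f assms(2) by blast
    qed
  qed
  have int: "?U \<inter> ?V = {e}"
  proof
    show "?U \<inter> ?V \<subseteq> {e}"
    proof
      fix f assume f: "f \<in> ?U \<inter> ?V"
      then obtain a b where "a \<noteq> b" "f = {a, b}" using sg_edge[OF assms(1)] by blast
      with f assms(3,4) show "f \<in> {e}" by auto
    qed
  qed (use assms in auto)
  have cU: "card ?U \<ge> 1" "card ?V \<ge> 1" using assms fe
    by (auto intro!: Suc_leI card_gt_0_iff[THEN iffD2])
  have "card ?U + card ?V = card (?U \<union> ?V) + card (?U \<inter> ?V)"
    by (rule card_Un_Int) (use fe in auto)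
  then have cUV: "card (?U \<union> ?V) = card ?U + card ?V - 1" using int by simp
  have cB: "card ?B = card ?U + card ?V - 2"
    using cUV assms fe by (subst card_Diff_singleton) auto
  have ci: "card ((\<lambda>f. {Inr e, Inr f :: 'a + 'a set}) ` ?B) = card ?B"
    by (rule card_image) (auto simp: inj_on_def doubleton_eq_iff)
  have c2: "card {{Inl u, Inr e}, {Inl v, Inr e}} = (2::nat)"
    using assms(3) by (auto simp: doubleton_eq_iff)
  have "card ({{Inl u, Inr e}, {Inl v, Inr e}} \<union> (\<lambda>f. {Inr e, Inr f :: 'a + 'a set}) ` ?B)
      = card {{Inl u, Inr e}, {Inl v, Inr e}} + card ((\<lambda>f. {Inr e, Inr f :: 'a + 'a set}) ` ?B)"
  proof (rule card_Un_disjoint)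
    show "finite ((\<lambda>f. {Inr e, Inr f :: 'a + 'a set}) ` ?B)" using fe by auto
    show "{{Inl u, Inr e}, {Inl v, Inr e}} \<inter> (\<lambda>f. {Inr e, Inr f :: 'a + 'a set}) ` ?B = {}"
      by (auto simp: doubleton_eq_iff)
  qed simp
  then show ?thesis unfolding degree_def eq using ci c2 cB cU by simp
qed


lemma deg_J_LL:
  fixes G1 :: "'a graph" and G2 :: "'b graph"
  shows "degree (edge_T_join G1 G2) (Inl (Inl v)) = degree (total_graph G1) (Inl v)"
proof -
  have eq: "{x \<in> edges (edge_T_join G1 G2). Inl (Inl v) \<in> x}
     = (\<lambda>f. (Inl :: 'a + 'a set \<Rightarrow> ('a + 'a set) + 'b) ` f) ` {f \<in> edges (total_graph G1). Inl v \<in> f}"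
    unfolding edges_J by auto
  show ?thesis unfolding degree_def eq
    by (rule card_image) (simp add: inj_img)
qed

lemma deg_J_LR:
  fixes G1 :: "'a graph" and G2 :: "'b graph"
  assumes "simple_graph G1" "simple_graph G2" "e \<in> edges G1"
  shows "degree (edge_T_join G1 G2) (Inl (Inr e)) = degree (total_graph G1) (Inr e) + card (verts G2)"
proof -
  let ?A = "(\<lambda>f. (Inl :: 'a + 'a set \<Rightarrow> ('a + 'a set) + 'b) ` f) ` {f \<in> edges (total_graph G1). Inr e \<in> f}"
  let ?B = "(\<lambda>w. {Inl (Inr e), Inr w :: ('a + 'a set) + 'b}) ` verts G2"
  have eq: "{x \<in> edges (edge_T_join G1 G2). Inl (Inr e) \<in> x} = ?A \<union> ?B"
    unfolding edges_J using assms(3) by auto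
  have cA: "card ?A = degree (total_graph G1) (Inr e)" unfolding degree_def
    by (rule card_image) (simp add: inj_img)
  have cB: "card ?B = card (verts G2)"
    by (rule card_image) (auto simp: inj_on_def doubleton_eq_iff)
  have "card (?A \<union> ?B) = card ?A + card ?B"
  proof (rule card_Un_disjoint)
    show "finite ?A" using finite_T[OF assms(1)] by auto
    show "finite ?B" using sg_fin[OF assms(2)] by auto
    show "?A \<inter> ?B = {}" by auto
  qed
  then show ?thesis unfolding degree_def eq using cA cB by (simp add: degree_def)
qed

lemma deg_J_R:
  fixes G1 :: "'a graph" and G2 :: "'b graph"
  assumes "simple_graph G1" "simple_graph G2" "w \<in> verts G2"
  shows "degree (edge_T_join G1 G2) (Inr w) = degree G2 w + card (edges G1)"
proof -
  let ?A = "(\<lambda>f. (Inr :: 'b \<Rightarrow> ('a + 'a set) + 'b) ` f) ` {f \<in> edges G2. w \<in> f}"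
  let ?B = "(\<lambda>e. {Inl (Inr e), Inr w :: ('a + 'a set) + 'b}) ` edges G1"
  have eq: "{x \<in> edges (edge_T_join G1 G2). Inr w \<in> x} = ?A \<union> ?B"
    unfolding edges_J using assms(3) by auto
  have cA: "card ?A = degree G2 w" unfolding degree_def
    by (rule card_image) (simp add: inj_img)
  have cB: "card ?B = card (edges G1)"
    by (rule card_image) (auto simp: inj_on_def doubleton_eq_iff)
  have "card (?A \<union> ?B) = card ?A + card ?B"
  proof (rule card_Un_disjoint)
    show "finite ?A" using sg_fin[OF assms(2)] by auto
    show "finite ?B" using sg_fin[OF assms(1)] by auto
    show "?A \<inter> ?B = {}" by auto
  qed
  then show ?thesis unfolding degree_def eq using cA cB by (simp add: degree_def)
qed


lemma deg_T_Inr_sum: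
  assumes "simple_graph G" "e \<in> edges G"
  shows "degree (total_graph G) (Inr e) = (\<Sum>x\<in>e. degree G x)"
proof -
  obtain u v where "u \<noteq> v" "e = {u, v}" using sg_edge[OF assms] by metis
  then show ?thesis using deg_T_Inr[OF assms] by simp
qed

lemma cube_edge:
  assumes "simple_graph G" "e \<in> edges G"
  shows "(\<Sum>x\<in>e. degree G x) ^ 3 = (\<Sum>x\<in>e. degree G x ^ 3)
      + 3 * ((\<Prod>x\<in>e. degree G x) * (\<Sum>x\<in>e. degree G x))"
proof -
  obtain u v where "u \<noteq> v" "e = {u, v}" using sg_edge[OF assms] by metis
  then show ?thesis by (simp add: power3_eq_cube algebra_simps)
qed

theorem theorem8:
  fixes G1 :: "'a graph" and G2 :: "'b graph"
  assumes "simple_graph G1" and "connected_graph G1"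
    and "simple_graph G2" and "connected_graph G2"
  shows "Fidx (edge_T_join G1 G2) =
      8 * Fidx G1 + Fidx G2 + 3 * (card (verts G2))^2 * M1 G1
      + 3 * card (edges G1) * M1 G2 + M4 G1 + 3 * card (verts G2) * HM G1 + 3 * ReZM G1
      + (card (edges G1))^2 * (6 * card (edges G2) + card (edges G1) * card (verts G2))
      + card (edges G1) * (card (verts G2))^3"
proof -
  let ?J = "edge_T_join G1 G2"
  let ?n = "card (verts G2)" and ?m = "card (edges G1)"
  define d1 where "d1 = degree G1"
  define d2 where "d2 = degree G2"
  define S where "S e = (\<Sum>x\<in>e. d1 x)" for e
  have fV1: "finite (verts G1)" and fE1: "finite (edges G1)" using sg_fin[OF assms(1)] by auto
  have fV2: "finite (verts G2)" and fE2: "finite (edges G2)" using sg_fin[OF assms(3)] by auto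
  have VJ: "verts ?J = Inl ` Inl ` verts G1 \<union> Inl ` Inr ` edges G1 \<union> Inr ` verts G2"
    unfolding verts_J verts_T by (simp add: image_Un)
  have "Fidx ?J = (\<Sum>x\<in>Inl ` Inl ` verts G1. degree ?J x ^ 3)
      + (\<Sum>x\<in>Inl ` Inr ` edges G1. degree ?J x ^ 3) + (\<Sum>x\<in>Inr ` verts G2. degree ?J x ^ 3)"
    unfolding Fidx_def VJ using fV1 fE1 fV2
    by (subst sum.union_disjoint; auto)+
  also have "(\<Sum>x\<in>Inl ` Inl ` verts G1. degree ?J x ^ 3) = (\<Sum>v\<in>verts G1. (2 * d1 v) ^ 3)"
    by (subst sum.reindex, simp)+ (auto simp: deg_J_LL deg_T_Inl[OF assms(1)] d1_def power_mult_distrib intro!: sum.cong)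
  also have "(\<Sum>x\<in>Inl ` Inr ` edges G1. degree ?J x ^ 3) = (\<Sum>e\<in>edges G1. (S e + ?n) ^ 3)"
    by (subst sum.reindex, simp)+ (auto simp: deg_J_LR[OF assms(1,3)]
        deg_T_Inr_sum[OF assms(1)] S_def d1_def intro!: sum.cong)
  also have "(\<Sum>x\<in>Inr ` verts G2. degree ?J x ^ 3) = (\<Sum>w\<in>verts G2. (d2 w + ?m) ^ 3)"
    by (subst sum.reindex) (auto simp: inj_on_def deg_J_R[OF assms(1,3)] d2_def intro!: sum.cong)
  finally have F: "Fidx ?J = (\<Sum>v\<in>verts G1. (2 * d1 v) ^ 3) + (\<Sum>e\<in>edges G1. (S e + ?n) ^ 3)
      + (\<Sum>w\<in>verts G2. (d2 w + ?m) ^ 3)" .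
  have p1: "(\<Sum>v\<in>verts G1. (2 * d1 v) ^ 3) = 8 * Fidx G1"
    by (simp add: Fidx_def d1_def sum_distrib_left power_mult_distrib)
  have hM1: "(\<Sum>e\<in>edges G1. S e) = M1 G1"
    using handshake[OF assms(1), of d1] by (simp add: S_def M1_def d1_def power2_eq_square)
  have hM4: "(\<Sum>e\<in>edges G1. \<Sum>x\<in>e. d1 x ^ 3) = M4 G1"
  proof -
    have *: "\<And>x::nat. x * x ^ 3 = x ^ 4" by (simp add: power_Suc[symmetric] del: power_Suc)
    have "(\<Sum>e\<in>edges G1. \<Sum>x\<in>e. d1 x ^ 3) = (\<Sum>v\<in>verts G1. degree G1 v * d1 v ^ 3)"
      by (rule handshake[OF assms(1)])
    also have "\<dots> = M4 G1" unfolding M4_def d1_def by (rule sum.cong) (simp_all add: \<open>\<And>x::nat. x * x ^ 3 = x ^ 4\<close>)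
    finally show ?thesis .
  qed
  have hS3: "(\<Sum>e\<in>edges G1. S e ^ 3) = M4 G1 + 3 * ReZM G1"
  proof -
    have "(\<Sum>e\<in>edges G1. S e ^ 3) = (\<Sum>e\<in>edges G1. (\<Sum>x\<in>e. d1 x ^ 3)
        + 3 * ((\<Prod>x\<in>e. d1 x) * S e))"
      by (rule sum.cong[OF refl]) (simp add: S_def d1_def cube_edge[OF assms(1)])
    also have "\<dots> = M4 G1 + 3 * ReZM G1"
      by (simp add: sum.distrib hM4[unfolded d1_def] sum_distrib_left ReZM_def S_def d1_def)
    finally show ?thesis .
  qed
  have hHM: "(\<Sum>e\<in>edges G1. S e ^ 2) = HM G1" by (simp add: HM_def S_def d1_def)
  have p2: "(\<Sum>e\<in>edges G1. (S e + ?n) ^ 3) = M4 G1 + 3 * ReZM G1 + 3 * ?n * HM G1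
      + 3 * ?n ^ 2 * M1 G1 + ?m * ?n ^ 3"
  proof -
    have "(\<Sum>e\<in>edges G1. (S e + ?n) ^ 3) = (\<Sum>e\<in>edges G1. S e ^ 3 + 3 * ?n * S e ^ 2
        + 3 * ?n ^ 2 * S e + ?n ^ 3)"
      by (rule sum.cong[OF refl]) (simp add: power3_eq_cube power2_eq_square algebra_simps)
    also have "\<dots> = (\<Sum>e\<in>edges G1. S e ^ 3) + 3 * ?n * (\<Sum>e\<in>edges G1. S e ^ 2)
        + 3 * ?n ^ 2 * (\<Sum>e\<in>edges G1. S e) + ?m * ?n ^ 3"
      by (simp add: sum.distrib sum_distrib_left)
    finally show ?thesis using hS3 hHM hM1 by simp
  qed
  have hd2: "(\<Sum>w\<in>verts G2. d2 w) = 2 * card (edges G2)"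
  proof -
    have "(\<Sum>e\<in>edges G2. \<Sum>v\<in>e. (1::nat)) = (\<Sum>e\<in>edges G2. 2)"
    proof (rule sum.cong[OF refl])
      fix e assume "e \<in> edges G2"
      then obtain u v where "u \<noteq> v" "e = {u, v}" using sg_edge[OF assms(3)] by metis
      then show "(\<Sum>v\<in>e. (1::nat)) = 2" by simp
    qed
    then show ?thesis using handshake[OF assms(3), of "\<lambda>_. 1::nat"] by (simp add: d2_def)
  qed
  have p3: "(\<Sum>w\<in>verts G2. (d2 w + ?m) ^ 3) = Fidx G2 + 3 * ?m * M1 G2
      + 6 * ?m ^ 2 * card (edges G2) + ?n * ?m ^ 3"
  proof -
    have "(\<Sum>w\<in>verts G2. (d2 w + ?m) ^ 3) = (\<Sum>w\<in>verts G2. d2 w ^ 3 + 3 * ?m * d2 w ^ 2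
        + 3 * ?m ^ 2 * d2 w + ?m ^ 3)"
      by (rule sum.cong[OF refl]) (simp add: power3_eq_cube power2_eq_square algebra_simps)
    also have "\<dots> = (\<Sum>w\<in>verts G2. d2 w ^ 3) + 3 * ?m * (\<Sum>w\<in>verts G2. d2 w ^ 2)
        + 3 * ?m ^ 2 * (\<Sum>w\<in>verts G2. d2 w) + ?n * ?m ^ 3"
      by (simp add: sum.distrib sum_distrib_left)
    finally show ?thesis using hd2 by (simp add: Fidx_def M1_def d2_def)
  qed
  show ?thesis unfolding F p1 p2 p3 by (simp add: algebra_simps power2_eq_square power3_eq_cube)
qed

end
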